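(* Let $\mathbf P=UV^\top$ be an ergodic transition matrix on $\{1,\dots,p\}$ with stationary distribution $\pi$, where $U,V\in\mathbb R^{p\times r}$ are entrywise nonnegative with $U\mathbf 1_r=\mathbf 1_p$, $V^\top\mathbf 1_p=\mathbf 1_r$. Suppose there are constants $c_1,C_1,c_2>0$ with $c_1p^{-1}\le\pi_j\le C_1p^{-1}$ for all $j$, $\lambda_{\min}(U^\top[\mathrm{diag}(\pi)]^2U)\ge c_2p^{-1}r^{-1}$ and $\lambda_{\min}(V^\top[\mathrm{diag}(\pi)]^{-1}V)\ge c_2r$. Let $\sigma_1\ge\dots\ge\sigma_r$ be the $r$ largest singular values of $\mathbf Q=\mathrm{diag}(\pi)\mathbf P[\mathrm{diag}(\pi)]^{-1/2}$. Then $$c_2p^{-1/2}\le\sigma_r\le\sigma_1\le C_1c_1^{-1/2}p^{-1/2}.$$ *)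

theory Defs
  imports "Jordan_Normal_Form.Char_Poly" "HOL-Computational_Algebra.Polynomial"
begin

text \<open>Finite Markov chains on states 0..p-1 given by a p x p matrix.\<close>

definition stochastic_mat :: "nat \<Rightarrow> real mat \<Rightarrow> bool" where
  "stochastic_mat p P \<longleftrightarrow> P \<in> carrier_mat p p \<and>
     (\<forall>i<p. \<forall>j<p. P $$ (i,j) \<ge> 0) \<and> (\<forall>i<p. (\<Sum>j<p. P $$ (i,j)) = 1)"

definition irreducible_chain :: "nat \<Rightarrow> real mat \<Rightarrow> bool" where
  "irreducible_chain p P \<longleftrightarrow> (\<forall>i<p. \<forall>j<p. \<exists>n. (P ^\<^sub>m n) $$ (i,j) > 0)"

definition period :: "real mat \<Rightarrow> nat \<Rightarrow> nat" where
  "period P i = Gcd {n. n > 0 \<and> (P ^\<^sub>m n) $$ (i,i) > 0}"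

definition aperiodic_chain :: "nat \<Rightarrow> real mat \<Rightarrow> bool" where
  "aperiodic_chain p P \<longleftrightarrow> (\<forall>i<p. period P i = 1)"

definition ergodic_chain :: "nat \<Rightarrow> real mat \<Rightarrow> bool" where
  "ergodic_chain p P \<longleftrightarrow> stochastic_mat p P \<and> irreducible_chain p P \<and> aperiodic_chain p P"

definition stationary_dist :: "nat \<Rightarrow> real mat \<Rightarrow> (nat \<Rightarrow> real) \<Rightarrow> bool" where
  "stationary_dist p P \<pi> \<longleftrightarrow> (\<forall>i<p. \<pi> i \<ge> 0) \<and> (\<Sum>i<p. \<pi> i) = 1 \<and>
     (\<forall>j<p. (\<Sum>i<p. \<pi> i * P $$ (i,j)) = \<pi> j)"

definition lambda_min :: "real mat \<Rightarrow> real" where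
  "lambda_min A = Min {x. eigenvalue A x}"

text \<open>Singular values of a real matrix Q, in non-increasing order, with multiplicity:
  square roots of the eigenvalues (roots of the characteristic polynomial) of Q^T Q.
  sing_val Q k is the k-th largest singular value (k starting at 1).\<close>
definition sing_vals :: "real mat \<Rightarrow> real list" where
  "sing_vals Q = rev (sorted_list_of_multiset
      (image_mset sqrt (proots (char_poly (transpose_mat Q * Q)))))"

definition sing_val :: "real mat \<Rightarrow> nat \<Rightarrow> real" where
  "sing_val Q k = sing_vals Q ! (k - 1)"

end

theory Submission
  imports Defs
begin
lemma cs_sum:
  fixes f g :: "'i \<Rightarrow> real"
  assumes "finite A"
  shows "(\<Sum>i\<in>A. f i * g i)^2 \<le> (\<Sum>i\<in>A. (f i)^2) * (\<Sum>i\<in>A. (g i)^2)"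
proof -
  have "0 \<le> (\<Sum>i\<in>A. \<Sum>j\<in>A. (f i * g j - f j * g i)^2)" by (intro sum_nonneg) auto
  also have "\<dots> = (\<Sum>i\<in>A. \<Sum>j\<in>A. (f i)^2 * (g j)^2) + (\<Sum>i\<in>A. \<Sum>j\<in>A. (f j)^2 * (g i)^2)
       - 2 * (\<Sum>i\<in>A. \<Sum>j\<in>A. (f i * g i) * (f j * g j))"
    by (simp add: power2_eq_square algebra_simps sum_subtractf sum.distrib sum_distrib_left)
  also have "(\<Sum>i\<in>A. \<Sum>j\<in>A. (f i)^2 * (g j)^2) = (\<Sum>i\<in>A. (f i)^2) * (\<Sum>i\<in>A. (g i)^2)"
    by (simp add: sum_product)
  also have "(\<Sum>i\<in>A. \<Sum>j\<in>A. (f j)^2 * (g i)^2) = (\<Sum>i\<in>A. (f i)^2) * (\<Sum>i\<in>A. (g i)^2)"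
    by (subst sum.swap) (simp add: sum_product)
  also have "(\<Sum>i\<in>A. \<Sum>j\<in>A. (f i * g i) * (f j * g j)) = (\<Sum>i\<in>A. f i * g i)^2"
    by (simp add: sum_product power2_eq_square)
  finally show ?thesis by simp
qed

lemma sprod_sum: "(v :: 'a :: semiring_0 vec) \<in> carrier_vec n \<Longrightarrow> u \<bullet> v = (\<Sum>i<n. u $ i * v $ i)"
  unfolding scalar_prod_def by (simp add: atLeast0LessThan)

lemma sprod_self_nonneg: "0 \<le> (v :: real vec) \<bullet> v"
  unfolding scalar_prod_def by (intro sum_nonneg) auto

lemma sprod_self_zero: assumes "(v :: real vec) \<in> carrier_vec n" "v \<bullet> v = 0" shows "v = 0\<^sub>v n"
proof (rule eq_vecI)
  show "dim_vec v = dim_vec (0\<^sub>v n)" using assms by auto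
  fix i assume i: "i < dim_vec (0\<^sub>v n)"
  have "(\<Sum>i\<in>{0..<dim_vec v}. v $ i * v $ i) = 0" using assms(2) unfolding scalar_prod_def by simp
  hence "\<forall>i\<in>{0..<dim_vec v}. v $ i * v $ i = 0"
    by (subst sum_nonneg_eq_0_iff[symmetric]) auto
  thus "v $ i = 0\<^sub>v n $ i" using i assms(1) by auto
qed

lemma vec_cs: assumes "(u :: real vec) \<in> carrier_vec n" "v \<in> carrier_vec n"
  shows "(u \<bullet> v)^2 \<le> (u \<bullet> u) * (v \<bullet> v)"
  using cs_sum[of "{..<n}" "\<lambda>i. u $ i" "\<lambda>i. v $ i"] assms
  by (simp add: sprod_sum[OF assms(1)] sprod_sum[OF assms(2)] power2_eq_square)

definition fro :: "real mat \<Rightarrow> real" where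
  "fro M = (\<Sum>i<dim_row M. \<Sum>j<dim_col M. (M $$ (i,j))^2)"

lemma mv_bound: assumes M: "M \<in> carrier_mat m n" and x: "x \<in> carrier_vec n"
  shows "(M *\<^sub>v x) \<bullet> (M *\<^sub>v x) \<le> fro M * (x \<bullet> x)"
proof -
  have "(M *\<^sub>v x) \<bullet> (M *\<^sub>v x) = (\<Sum>i<m. (row M i \<bullet> x)^2)"
    using M x by (subst sprod_sum[of _ m]) (auto simp: power2_eq_square)
  also have "\<dots> \<le> (\<Sum>i<m. (row M i \<bullet> row M i) * (x \<bullet> x))"
    by (intro sum_mono vec_cs[of _ n]) (use M x in auto)
  also have "\<dots> = fro M * (x \<bullet> x)"
    unfolding fro_def using M
    by (simp add: sum_distrib_right sprod_sum[of _ n] power2_eq_square)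
  finally show ?thesis .
qed

lemma fro_nonneg: "0 \<le> fro M" unfolding fro_def by (intro sum_nonneg) auto

lemma quad_bound: assumes M: "M \<in> carrier_mat n n" and x: "x \<in> carrier_vec n"
  shows "\<bar>x \<bullet> (M *\<^sub>v x)\<bar> \<le> sqrt (fro M) * (x \<bullet> x)"
proof -
  have "(x \<bullet> (M *\<^sub>v x))^2 \<le> (x \<bullet> x) * ((M *\<^sub>v x) \<bullet> (M *\<^sub>v x))"
    by (rule vec_cs[of _ n]) (use M x in auto)
  also have "\<dots> \<le> (x \<bullet> x) * (fro M * (x \<bullet> x))"
    by (intro mult_left_mono mv_bound[OF M x] sprod_self_nonneg)
  also have "\<dots> = (sqrt (fro M) * (x \<bullet> x))^2"
    using fro_nonneg[of M] by (simp add: power2_eq_square)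
  finally have "\<bar>x \<bullet> (M *\<^sub>v x)\<bar> \<le> \<bar>sqrt (fro M) * (x \<bullet> x)\<bar>"
    by (simp only: abs_le_square_iff)
  moreover have "0 \<le> sqrt (fro M) * (x \<bullet> x)" using fro_nonneg sprod_self_nonneg by simp
  ultimately show ?thesis by simp
qed

lemma quad_expand:
  fixes G :: "real mat"
  assumes G: "G \<in> carrier_mat n n" and x: "x \<in> carrier_vec n" and w: "w \<in> carrier_vec n"
  shows "(x - t \<cdot>\<^sub>v w) \<bullet> (G *\<^sub>v (x - t \<cdot>\<^sub>v w)) =
     x \<bullet> (G *\<^sub>v x) - t * (x \<bullet> (G *\<^sub>v w)) - t * (w \<bullet> (G *\<^sub>v x)) + t * t * (w \<bullet> (G *\<^sub>v w))"
proof -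
  have Gv: "G *\<^sub>v (x - t \<cdot>\<^sub>v w) = G *\<^sub>v x - t \<cdot>\<^sub>v (G *\<^sub>v w)"
    using G x w by (simp add: mult_minus_distrib_mat_vec[of G n n] mult_mat_vec[of G n n])
  show ?thesis unfolding Gv using G x w
    by (simp add: scalar_prod_minus_distrib[of _ n] minus_scalar_prod_distrib[of _ n] algebra_simps)
qed

lemma sym_bilin:
  fixes G :: "real mat"
  assumes G: "G \<in> carrier_mat n n" and sym: "transpose_mat G = G"
    and x: "x \<in> carrier_vec n" and w: "w \<in> carrier_vec n"
  shows "x \<bullet> (G *\<^sub>v w) = w \<bullet> (G *\<^sub>v x)"
proof -
  have "(transpose_mat G *\<^sub>v x) \<bullet> w = x \<bullet> (G *\<^sub>v w)"
    by (rule transpose_vec_mult_scalar[OF G w x])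
  thus ?thesis using sym G x w by (simp add: comm_scalar_prod[of _ n])
qed

lemma smult_mat_vec: assumes A: "(A :: real mat) \<in> carrier_mat n n" and x: "x \<in> carrier_vec n"
  shows "(k \<cdot>\<^sub>m A) *\<^sub>v x = k \<cdot>\<^sub>v (A *\<^sub>v x)"
  using A x by (intro eq_vecI) auto
lemma char_matrix_mult_vec:
  fixes G :: "real mat"
  assumes G: "G \<in> carrier_mat n n" and x: "x \<in> carrier_vec n"
  shows "char_matrix G m *\<^sub>v x = G *\<^sub>v x - m \<cdot>\<^sub>v x"
  using G x unfolding char_matrix_def
  by (subst add_mult_distrib_mat_vec[of _ n n]) (auto simp: smult_mat_vec[of _ n] minus_add_uminus_vec[of _ n])

lemma finite_eigenvalues:
  fixes G :: "real mat"
  assumes G: "G \<in> carrier_mat n n"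
  shows "finite {x. eigenvalue G x}"
proof -
  have "char_poly G \<noteq> 0" using degree_monic_char_poly[OF G] by auto
  hence "finite {x. poly (char_poly G) x = 0}" by (rule poly_roots_finite)
  thus ?thesis using eigenvalue_root_char_poly[OF G] by simp
qed

lemma rayleigh_lower:
  fixes G :: "real mat"
  assumes G: "G \<in> carrier_mat n n" and n: "0 < n" and sym: "transpose_mat G = G"
    and x0: "x0 \<in> carrier_vec n"
  shows "lambda_min G * (x0 \<bullet> x0) \<le> x0 \<bullet> (G *\<^sub>v x0)"
proof -
  define S where "S = (\<lambda>x. x \<bullet> (G *\<^sub>v x)) ` {x \<in> carrier_vec n. x \<bullet> x = 1}"
  define K where "K = sqrt (fro G)"
  have K0: "0 \<le> K" unfolding K_def using fro_nonneg by simp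
  have e0: "(unit_vec n 0 :: real vec) \<in> carrier_vec n" "(unit_vec n 0 :: real vec) \<bullet> unit_vec n 0 = 1"
    using n scalar_prod_left_unit[of "unit_vec n 0" n 0] by auto
  hence Sne: "S \<noteq> {}" unfolding S_def by blast
  have Sbdd: "bdd_below S"
  proof
    fix s assume "s \<in> S"
    then obtain x where x: "x \<in> carrier_vec n" "x \<bullet> x = 1" and s: "s = x \<bullet> (G *\<^sub>v x)"
      unfolding S_def by auto
    from quad_bound[OF G x(1)] x(2) s show "- K \<le> s" unfolding K_def by simp
  qed
  define m where "m = Inf S"
  have low: "m * (y \<bullet> y) \<le> y \<bullet> (G *\<^sub>v y)" if y: "y \<in> carrier_vec n" for y
  proof (cases "y \<bullet> y = 0")
    case True
    hence "y = 0\<^sub>v n" using sprod_self_zero[OF y] by simp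
    thus ?thesis using G by simp
  next
    case False
    have yy: "0 < y \<bullet> y" using False sprod_self_nonneg[of y] by simp
    define c where "c = 1 / sqrt (y \<bullet> y)"
    have c2: "c * c = 1 / (y \<bullet> y)" unfolding c_def using yy by (simp add: real_sqrt_mult[symmetric])
    define z where "z = c \<cdot>\<^sub>v y"
    have z: "z \<in> carrier_vec n" unfolding z_def using y by simp
    have zz: "z \<bullet> z = 1" unfolding z_def using y yy c2 by (simp add: mult.assoc[symmetric])
    have zGz: "z \<bullet> (G *\<^sub>v z) = c * c * (y \<bullet> (G *\<^sub>v y))"
      unfolding z_def using y G by (simp add: mult_mat_vec[of G n n])
    have "z \<bullet> (G *\<^sub>v z) \<in> S" unfolding S_def using z zz by blast
    hence "m \<le> z \<bullet> (G *\<^sub>v z)" unfolding m_def by (intro cInf_lower Sbdd)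
    hence "m \<le> (y \<bullet> (G *\<^sub>v y)) / (y \<bullet> y)" unfolding zGz c2 by simp
    thus ?thesis using yy by (simp add: pos_le_divide_eq)
  qed
  define B where "B = char_matrix G m"
  have B: "B \<in> carrier_mat n n" unfolding B_def using G by simp
  have detB: "det B = 0"
  proof (rule ccontr)
    assume "det B \<noteq> 0"
    from det_non_zero_imp_unit[OF B this, of "()"]
    obtain N where N: "N \<in> carrier_mat n n" and NB: "N * B = 1\<^sub>m n"
      unfolding Units_def ring_mat_def by auto
    define L where "L = K + \<bar>m\<bar> + 1"
    have L0: "0 < L" unfolding L_def using K0 by simp
    define F where "F = fro N + 1"
    have F0: "0 < F" unfolding F_def using fro_nonneg[of N] by simp
    have key: "x \<bullet> x \<le> F * L * (x \<bullet> (G *\<^sub>v x) - m * (x \<bullet> x))" if x: "x \<in> carrier_vec n" for x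
    proof -
      define w where "w = G *\<^sub>v x - m \<cdot>\<^sub>v x"
      have w: "w \<in> carrier_vec n" unfolding w_def using G x by simp
      have Bx: "B *\<^sub>v x = w" unfolding B_def w_def by (rule char_matrix_mult_vec[OF G x])
      define \<alpha> where "\<alpha> = x \<bullet> (G *\<^sub>v x) - m * (x \<bullet> x)"
      define \<beta> where "\<beta> = w \<bullet> w"
      have \<beta>0: "0 \<le> \<beta>" unfolding \<beta>_def by (rule sprod_self_nonneg)
      have wGx: "w \<bullet> (G *\<^sub>v x) - m * (w \<bullet> x) = \<beta>"
      proof -
        have "w \<bullet> w = w \<bullet> (G *\<^sub>v x - m \<cdot>\<^sub>v x)" unfolding w_def ..
        also have "\<dots> = w \<bullet> (G *\<^sub>v x) - w \<bullet> (m \<cdot>\<^sub>v x)"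
          using G x w by (intro scalar_prod_minus_distrib[of _ n]) auto
        finally have "w \<bullet> w = w \<bullet> (G *\<^sub>v x) - w \<bullet> (m \<cdot>\<^sub>v x)" .
        thus ?thesis unfolding \<beta>_def using x w by simp
      qed
      have xGw: "x \<bullet> (G *\<^sub>v w) = w \<bullet> (G *\<^sub>v x)" by (rule sym_bilin[OF G sym x w])
      have wx: "x \<bullet> w = w \<bullet> x" using x w by (simp add: comm_scalar_prod[of _ n])
      have wGw: "w \<bullet> (G *\<^sub>v w) - m * (w \<bullet> w) \<le> L * \<beta>"
      proof -
        have "w \<bullet> (G *\<^sub>v w) \<le> K * (w \<bullet> w)" using quad_bound[OF G w] unfolding K_def by simp
        moreover have "- m * (w \<bullet> w) \<le> \<bar>m\<bar> * (w \<bullet> w)"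
          using sprod_self_nonneg[of w] by (intro mult_right_mono) auto
        ultimately show ?thesis unfolding L_def \<beta>_def using sprod_self_nonneg[of w]
          by (simp add: algebra_simps)
      qed
      define t where "t = 1 / L"
      have xt: "x - t \<cdot>\<^sub>v w \<in> carrier_vec n" using x w by simp
      have "0 \<le> (x - t \<cdot>\<^sub>v w) \<bullet> (G *\<^sub>v (x - t \<cdot>\<^sub>v w)) - m * ((x - t \<cdot>\<^sub>v w) \<bullet> (x - t \<cdot>\<^sub>v w))"
        using low[OF xt] by simp
      also have "(x - t \<cdot>\<^sub>v w) \<bullet> (x - t \<cdot>\<^sub>v w) = x \<bullet> x - t * (x \<bullet> w) - t * (w \<bullet> x) + t * t * (w \<bullet> w)"
        using x w by (simp add: scalar_prod_minus_distrib[of _ n] minus_scalar_prod_distrib[of _ n] algebra_simps)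
      also have "(x - t \<cdot>\<^sub>v w) \<bullet> (G *\<^sub>v (x - t \<cdot>\<^sub>v w)) =
         x \<bullet> (G *\<^sub>v x) - t * (x \<bullet> (G *\<^sub>v w)) - t * (w \<bullet> (G *\<^sub>v x)) + t * t * (w \<bullet> (G *\<^sub>v w))"
        by (rule quad_expand[OF G x w])
      finally have "0 \<le> \<alpha> - 2 * t * \<beta> + t * t * (w \<bullet> (G *\<^sub>v w) - m * (w \<bullet> w))"
        unfolding \<alpha>_def using wGx xGw wx by (simp add: algebra_simps)
      also have "\<dots> \<le> \<alpha> - 2 * t * \<beta> + t * t * (L * \<beta>)"
        using wGw by (intro add_left_mono mult_left_mono) auto
      also have "t * t * (L * \<beta>) = t * \<beta>" unfolding t_def using L0 by simp
      finally have b: "\<beta> \<le> L * \<alpha>" unfolding t_def using L0 by (simp add: field_simps)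
      have "x = N *\<^sub>v w" using NB N B x by (metis Bx assoc_mult_mat_vec one_mult_mat_vec)
      hence "x \<bullet> x \<le> fro N * \<beta>" unfolding \<beta>_def using mv_bound[OF N w] by simp
      also have "\<dots> \<le> F * \<beta>" unfolding F_def using \<beta>0 by (simp add: algebra_simps)
      also have "\<dots> \<le> F * (L * \<alpha>)" using b F0 by simp
      finally show ?thesis unfolding \<alpha>_def by simp
    qed
    define \<kappa> where "\<kappa> = 1 / (F * L)"
    have \<kappa>0: "0 < \<kappa>" unfolding \<kappa>_def using F0 L0 by simp
    have "m + \<kappa> \<le> Inf S"
    proof (rule cInf_greatest[OF Sne])
      fix s assume "s \<in> S"
      then obtain x where x: "x \<in> carrier_vec n" "x \<bullet> x = 1" and s: "s = x \<bullet> (G *\<^sub>v x)"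
        unfolding S_def by auto
      from key[OF x(1)] x(2) have "1 \<le> F * L * (s - m)" unfolding s by simp
      thus "m + \<kappa> \<le> s" unfolding \<kappa>_def using F0 L0 by (simp add: field_simps)
    qed
    thus False using \<kappa>0 unfolding m_def by simp
  qed
  hence ev: "eigenvalue G m" unfolding B_def using eigenvalue_det[OF G] by simp
  have "lambda_min G \<le> m" unfolding lambda_min_def
    using finite_eigenvalues[OF G] ev by (intro Min_le) auto
  hence "lambda_min G * (x0 \<bullet> x0) \<le> m * (x0 \<bullet> x0)"
    using sprod_self_nonneg[of x0] by (intro mult_right_mono)
  also have "\<dots> \<le> x0 \<bullet> (G *\<^sub>v x0)" by (rule low[OF x0])
  finally show ?thesis .
qed

lemma sylvester_char_poly:
  fixes Y G :: "real mat"
  assumes Y: "Y \<in> carrier_mat p r" and G: "G \<in> carrier_mat r r"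
  shows "[:0,1:]^r * char_poly (Y * G * transpose_mat Y) = [:0,1:]^p * char_poly (G * transpose_mat Y * Y)"
proof -
  define c :: "real mat \<Rightarrow> real poly mat" where "c = map_mat (\<lambda>a. [:a:])"
  define x :: "real poly" where "x = [:0,1:]"
  define W where "W = G * transpose_mat Y"
  have W: "W \<in> carrier_mat r p" unfolding W_def using Y G by auto
  define Yp where "Yp = c Y"
  define Z where "Z = c W"
  have Yp: "Yp \<in> carrier_mat p r" unfolding Yp_def c_def using Y by auto
  have Z: "Z \<in> carrier_mat r p" unfolding Z_def c_def using W by auto
  have YZ: "Yp * Z = c (Y * G * transpose_mat Y)"
    unfolding Yp_def Z_def c_def W_def using Y G
    by (subst assoc_mult_mat[of _ p r _ r _ p], auto simp: map_poly_mult(1)[of _ p r _ p])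
  have ZY: "Z * Yp = c (G * transpose_mat Y * Y)"
    unfolding Yp_def Z_def c_def W_def using Y G
    using map_poly_mult(1)[of "G * transpose_mat Y" r p Y r] by auto
  have cpm: "char_poly_matrix M = x \<cdot>\<^sub>m 1\<^sub>m n - c M" if M: "M \<in> carrier_mat n n" for M n
    unfolding char_poly_matrix_def x_def c_def using M by (intro eq_matI) auto
  define L where "L = four_block_mat (x \<cdot>\<^sub>m 1\<^sub>m p) Yp Z (1\<^sub>m r)"
  define R1 where "R1 = four_block_mat (1\<^sub>m p) (0\<^sub>m p r) (- Z) (1\<^sub>m r)"
  define R2 where "R2 = four_block_mat (1\<^sub>m p) (0\<^sub>m p r) (- Z) (x \<cdot>\<^sub>m 1\<^sub>m r)"
  have L: "L \<in> carrier_mat (p + r) (p + r)" unfolding L_def by auto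
  have R1: "R1 \<in> carrier_mat (p + r) (p + r)" unfolding R1_def by auto
  have R2: "R2 \<in> carrier_mat (p + r) (p + r)" unfolding R2_def by auto
  have A1: "Y * G * transpose_mat Y \<in> carrier_mat p p" using Y G by auto
  have A2: "G * transpose_mat Y * Y \<in> carrier_mat r r" using Y G by auto
  have LR1: "L * R1 = four_block_mat (char_poly_matrix (Y * G * transpose_mat Y)) Yp (0\<^sub>m r p) (1\<^sub>m r)"
    unfolding L_def R1_def
    apply (subst mult_four_block_mat[of _ p p _ r _ r _ _ p _ r])
    using Yp Z apply (auto simp: cpm[OF A1] YZ[symmetric])
    done
  have R2L: "R2 * L = four_block_mat (x \<cdot>\<^sub>m 1\<^sub>m p) Yp (0\<^sub>m r p) (char_poly_matrix (G * transpose_mat Y * Y))"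
    unfolding L_def R2_def
    apply (subst mult_four_block_mat[of _ p p _ r _ r _ _ p _ r])
    using Yp Z apply (auto simp: cpm[OF A2] ZY[symmetric] mult_smult_distrib[of _ r p _ p] mult_smult_assoc_mat[of _ r r _ p])
    done
  have dR1: "det R1 = 1" unfolding R1_def
    by (subst det_four_block_mat_upper_right_zero[of _ p _ r]) (use Z in auto)
  have dR2: "det R2 = x ^ r" unfolding R2_def
    by (subst det_four_block_mat_upper_right_zero[of _ p _ r]) (use Z in auto)
  have "det L = det (L * R1)" using det_mult[OF L R1] dR1 by simp
  also have "\<dots> = char_poly (Y * G * transpose_mat Y)" unfolding LR1 char_poly_def
    by (subst det_four_block_mat_lower_left_zero[of _ p _ r]) (use Yp A1 in auto)
  finally have dL: "det L = char_poly (Y * G * transpose_mat Y)" .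
  have "x ^ r * det L = det (R2 * L)" using det_mult[OF R2 L] dR2 by simp
  also have "\<dots> = x ^ p * char_poly (G * transpose_mat Y * Y)" unfolding R2L char_poly_def
    by (subst det_four_block_mat_lower_left_zero[of _ p _ r]) (use Yp A2 in auto)
  finally show ?thesis unfolding dL x_def .
qed

lemma sym_eigen_real:
  fixes A :: "real mat" and a :: complex
  assumes A: "A \<in> carrier_mat n n" and sym: "transpose_mat A = A"
    and ev: "eigenvalue (map_mat complex_of_real A) a"
  shows "cnj a = a"
proof -
  let ?Ac = "map_mat complex_of_real A"
  from ev obtain v where v: "v \<in> carrier_vec n" "v \<noteq> 0\<^sub>v n" "?Ac *\<^sub>v v = a \<cdot>\<^sub>v v"
    unfolding eigenvalue_def eigenvector_def using A by auto
  have Aij: "A $$ (i,j) = A $$ (j,i)" if "i < n" "j < n" for i j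
    using arg_cong[OF sym, of "\<lambda>M. M $$ (j,i)"] that A by auto
  define N where "N = (\<Sum>i<n. cnj (v $ i) * v $ i)"
  define s where "s = (\<Sum>i<n. \<Sum>j<n. cnj (v $ i) * complex_of_real (A $$ (i,j)) * v $ j)"
  have Av: "(?Ac *\<^sub>v v) $ i = (\<Sum>j<n. complex_of_real (A $$ (i,j)) * v $ j)" if i: "i < n" for i
    using A v(1) i by (auto simp: scalar_prod_def row_def atLeast0LessThan)
  have "s = (\<Sum>i<n. cnj (v $ i) * (?Ac *\<^sub>v v) $ i)"
    unfolding s_def by (intro sum.cong refl) (simp add: Av sum_distrib_left mult.assoc)
  also have "\<dots> = a * N" unfolding N_def v(3) using v(1)
    by (simp add: sum_distrib_left algebra_simps)
  finally have sN: "s = a * N" .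
  have "cnj s = (\<Sum>i<n. \<Sum>j<n. v $ i * complex_of_real (A $$ (i,j)) * cnj (v $ j))"
    unfolding s_def by (simp add: cnj_sum)
  also have "\<dots> = (\<Sum>j<n. \<Sum>i<n. v $ i * complex_of_real (A $$ (i,j)) * cnj (v $ j))"
    by (rule sum.swap)
  also have "\<dots> = s" unfolding s_def
    by (intro sum.cong refl) (simp add: Aij mult.commute mult.left_commute)
  finally have cs: "cnj s = s" .
  have Nr: "N = complex_of_real (\<Sum>i<n. (cmod (v $ i))^2)"
    unfolding N_def of_real_sum by (intro sum.cong refl) (metis complex_norm_square of_real_power mult.commute)
  have "(\<Sum>i<n. (cmod (v $ i))^2) \<noteq> 0"
  proof
    assume "(\<Sum>i<n. (cmod (v $ i))^2) = 0"
    hence "\<forall>i\<in>{..<n}. (cmod (v $ i))^2 = 0" by (subst sum_nonneg_eq_0_iff[symmetric]) auto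
    hence "v = 0\<^sub>v n" using v(1) by (intro eq_vecI) auto
    thus False using v(2) by simp
  qed
  hence N0: "N \<noteq> 0" unfolding Nr by (simp only: of_real_eq_0_iff not_False_eq_True)
  have cN: "cnj N = N" unfolding Nr by (rule complex_cnj_complex_of_real)
  have "cnj a * N = a * N" using cs unfolding sN by (metis complex_cnj_mult cN)
  thus ?thesis using N0 by simp
qed

lemma sym_char_poly_split:
  fixes A :: "real mat"
  assumes A: "A \<in> carrier_mat n n" and sym: "transpose_mat A = A"
  shows "\<exists>es. char_poly A = (\<Prod>e\<leftarrow>es. [:-e,1:]) \<and> length es = n"
proof -
  interpret mp: map_poly_inj_comm_ring_hom "complex_of_real" ..
  let ?Ac = "map_mat complex_of_real A"
  have Ac: "?Ac \<in> carrier_mat n n" using A by simp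
  have cp: "char_poly ?Ac = map_poly complex_of_real (char_poly A)"
    using of_real_hom.char_poly_hom[OF A] by simp
  obtain as where as: "char_poly ?Ac = (\<Prod>a\<leftarrow>as. [:-a,1:])" "length as = n"
    using char_poly_factorized[OF Ac] by blast
  have real: "a = complex_of_real (Re a)" if a: "a \<in> set as" for a
  proof -
    have "poly (char_poly ?Ac) a = 0" unfolding as(1) using linear_poly_root[OF a] .
    hence "eigenvalue ?Ac a" using eigenvalue_root_char_poly[OF Ac] by simp
    hence "cnj a = a" by (rule sym_eigen_real[OF A sym])
    thus ?thesis by (metis Reals_cnj_iff Re_complex_of_real Reals_cases)
  qed
  define es where "es = map Re as"
  have "map_poly complex_of_real (\<Prod>e\<leftarrow>es. [:-e,1:]) = (\<Prod>e\<leftarrow>es. [:-complex_of_real e,1:])"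
    by (induct es) (simp_all add: mp.hom_mult del: mult_pCons_left)
  also have "\<dots> = (\<Prod>a\<leftarrow>as. [:-a,1:])" unfolding es_def
    by (simp add: o_def) (metis (no_types, lifting) map_eq_conv real)
  finally have "map_poly complex_of_real (\<Prod>e\<leftarrow>es. [:-e,1:]) = map_poly complex_of_real (char_poly A)"
    using as(1) cp by simp
  hence "char_poly A = (\<Prod>e\<leftarrow>es. [:-e,1:])" using mp.eq_iff by simp
  moreover have "length es = n" using as(2) unfolding es_def by simp
  ultimately show ?thesis by blast
qed

lemma proots_linear_prod: "proots (\<Prod>e\<leftarrow>es. [:-e,1:]) = mset (es :: real list)"
proof (induct es)
  case (Cons a es)
  have nz: "(\<Prod>e\<leftarrow>es. [:-e,1:]) \<noteq> (0 :: real poly)"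
    by (auto simp: prod_list_zero_iff)
  have "proots (\<Prod>e\<leftarrow>a # es. [:-e,1:]) = proots [:-a,1:] + proots (\<Prod>e\<leftarrow>es. [:-e,1:])"
    by (simp only: list.map prod_list.Cons, rule proots_mult) (use nz in auto)
  thus ?case using Cons by simp
qed simp

lemma sorted_kth_ge:
  fixes M :: "real multiset"
  assumes r: "1 \<le> r" and cnt: "r \<le> size (filter_mset (\<lambda>y. t \<le> y) M)"
  shows "t \<le> rev (sorted_list_of_multiset M) ! (r - 1)"
proof -
  define L where "L = sorted_list_of_multiset M"
  have sL: "sorted L" and mL: "mset L = M" unfolding L_def by auto
  define p where "p = length L"
  have "size (filter_mset (\<lambda>y. t \<le> y) M) \<le> size M" by (rule size_filter_mset_lesseq)
  hence rp: "r \<le> p" using cnt mL unfolding p_def by (metis size_mset order_trans)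
  have revL: "rev L ! (r - 1) = L ! (p - r)" unfolding p_def using r rp
    by (subst rev_nth) (auto simp: p_def)
  show ?thesis
  proof (rule ccontr)
    assume "\<not> ?thesis"
    hence lt: "L ! (p - r) < t" using revL unfolding L_def by simp
    define k where "k = p - r + 1"
    have small: "\<forall>y\<in>set (take k L). y < t"
    proof
      fix y assume "y \<in> set (take k L)"
      then obtain i where i: "i < length (take k L)" "y = take k L ! i" by (auto simp: in_set_conv_nth)
      have ik: "i \<le> p - r" "i < p" using i(1) unfolding k_def p_def by auto
      have "L ! i \<le> L ! (p - r)" using sorted_nth_mono[OF sL ik(1)] rp r ik unfolding p_def by auto
      thus "y < t" using i lt by simp
    qed
    have "filter (\<lambda>y. t \<le> y) L = filter (\<lambda>y. t \<le> y) (take k L) @ filter (\<lambda>y. t \<le> y) (drop k L)"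
      by (metis append_take_drop_id filter_append)
    also have "filter (\<lambda>y. t \<le> y) (take k L) = []" using small by (auto simp: filter_empty_conv)
    finally have "length (filter (\<lambda>y. t \<le> y) L) \<le> length (drop k L)"
      using length_filter_le[of _ "drop k L"] by simp
    also have "\<dots> = r - 1" unfolding k_def p_def using rp r p_def by auto
    finally have "length (filter (\<lambda>y. t \<le> y) L) < r" using r by simp
    moreover have "size (filter_mset (\<lambda>y. t \<le> y) M) = length (filter (\<lambda>y. t \<le> y) L)"
      using mL by (metis mset_filter size_mset)
    ultimately show False using cnt by simp
  qed
qed

lemma sorted_kth_le_first:
  fixes M :: "real multiset"
  assumes r: "1 \<le> r" "r \<le> size M"
  shows "rev (sorted_list_of_multiset M) ! (r - 1) \<le> rev (sorted_list_of_multiset M) ! (1 - 1)"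
proof -
  define L where "L = sorted_list_of_multiset M"
  have sL: "sorted L" and lL: "length L = size M" unfolding L_def
    by (auto, metis mset_sorted_list_of_multiset size_mset)
  have "rev L ! (r - 1) = L ! (size M - r)" using r lL by (subst rev_nth) auto
  moreover have "rev L ! 0 = L ! (size M - 1)" using r lL by (subst rev_nth) auto
  moreover have "L ! (size M - r) \<le> L ! (size M - 1)" using r lL by (intro sorted_nth_mono[OF sL]) auto
  ultimately show ?thesis unfolding L_def by simp
qed

lemma sorted_first_le:
  fixes M :: "real multiset"
  assumes ne: "M \<noteq> {#}" and bnd: "\<forall>y\<in>#M. y \<le> b"
  shows "rev (sorted_list_of_multiset M) ! (1 - 1) \<le> b"
proof -
  define L where "L = sorted_list_of_multiset M"
  have mL: "mset L = M" unfolding L_def by auto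
  have "L \<noteq> []" using ne mL by auto
  hence "rev L ! 0 \<in> set L" by (metis length_greater_0_conv length_rev nth_mem set_rev)
  hence "rev L ! 0 \<in># M" using mL by (metis set_mset_mset)
  thus ?thesis using bnd unfolding L_def by simp
qed

lemma Q_entry:
  fixes P :: "real mat"
  assumes P: "P \<in> carrier_mat p p" and i: "i < p" and j: "j < p"
  shows "(mat_diag p \<pi> * P * mat_diag p f) $$ (i,j) = \<pi> i * P $$ (i,j) * f j"
proof -
  have "mat_diag p \<pi> * P = mat p p (\<lambda>(i,j). \<pi> i * P $$ (i,j))"
    by (rule mat_diag_mult_left[OF P])
  moreover have "mat p p (\<lambda>(i,j). \<pi> i * P $$ (i,j)) * mat_diag p f
     = mat p p (\<lambda>(i,j). mat p p (\<lambda>(i,j). \<pi> i * P $$ (i,j)) $$ (i,j) * f j)"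
    by (rule mat_diag_mult_right) simp
  ultimately show ?thesis using i j by simp
qed

lemma Q_contract:
  fixes P :: "real mat" and \<pi> :: "nat \<Rightarrow> real"
  assumes P: "P \<in> carrier_mat p p"
    and nonneg: "\<forall>i<p. \<forall>j<p. P $$ (i,j) \<ge> 0"
    and rows: "\<forall>i<p. (\<Sum>j<p. P $$ (i,j)) = 1"
    and stat: "\<forall>j<p. (\<Sum>i<p. \<pi> i * P $$ (i,j)) = \<pi> j"
    and pos: "\<forall>j<p. 0 < \<pi> j" and up: "\<forall>j<p. \<pi> j \<le> b"
    and x: "x \<in> carrier_vec p"
  shows "((mat_diag p \<pi> * P * mat_diag p (\<lambda>i. 1 / sqrt (\<pi> i))) *\<^sub>v x) \<bullet>
         ((mat_diag p \<pi> * P * mat_diag p (\<lambda>i. 1 / sqrt (\<pi> i))) *\<^sub>v x) \<le> b * (x \<bullet> x)"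
proof -
  define Q where "Q = mat_diag p \<pi> * P * mat_diag p (\<lambda>i. 1 / sqrt (\<pi> i))"
  have Q: "Q \<in> carrier_mat p p" unfolding Q_def using P by (metis mat_diag_dim mult_carrier_mat)
  define y where "y = (\<lambda>j. x $ j / sqrt (\<pi> j))"
  define S where "S = (\<lambda>i. \<Sum>j<p. P $$ (i,j) * y j)"
  have Qx: "(Q *\<^sub>v x) $ i = \<pi> i * S i" if i: "i < p" for i
  proof -
    have "(Q *\<^sub>v x) $ i = (\<Sum>j<p. Q $$ (i,j) * x $ j)"
      using Q x i by (simp add: scalar_prod_def row_def atLeast0LessThan)
    also have "\<dots> = (\<Sum>j<p. \<pi> i * (P $$ (i,j) * y j))"
      unfolding Q_def y_def using P i by (intro sum.cong refl) (simp add: Q_entry)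
    finally show ?thesis unfolding S_def by (simp add: sum_distrib_left)
  qed
  have S2: "(S i)^2 \<le> (\<Sum>j<p. P $$ (i,j) * (y j)^2)" if i: "i < p" for i
  proof -
    have "(S i)^2 = (\<Sum>j<p. sqrt (P $$ (i,j)) * (sqrt (P $$ (i,j)) * y j))^2"
      unfolding S_def using nonneg i
      by (intro arg_cong[of _ _ "\<lambda>z. z^2"] sum.cong refl) (simp add: mult.assoc[symmetric])
    also have "\<dots> \<le> (\<Sum>j<p. (sqrt (P $$ (i,j)))^2) * (\<Sum>j<p. (sqrt (P $$ (i,j)) * y j)^2)"
      by (rule cs_sum) simp
    also have "(\<Sum>j<p. (sqrt (P $$ (i,j)))^2) = 1" using nonneg rows i by simp
    also have "(\<Sum>j<p. (sqrt (P $$ (i,j)) * y j)^2) = (\<Sum>j<p. P $$ (i,j) * (y j)^2)"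
      using nonneg i by (intro sum.cong refl) (simp add: power_mult_distrib)
    finally show ?thesis by simp
  qed
  have "(Q *\<^sub>v x) \<bullet> (Q *\<^sub>v x) = (\<Sum>i<p. (Q *\<^sub>v x) $ i * (Q *\<^sub>v x) $ i)"
    by (rule sprod_sum[OF mult_mat_vec_carrier[OF Q x]])
  also have "\<dots> = (\<Sum>i<p. (\<pi> i)^2 * (S i)^2)"
    by (intro sum.cong refl) (auto simp del: index_mult_mat_vec simp: Qx power2_eq_square)
  also have "\<dots> \<le> (\<Sum>i<p. (b * \<pi> i) * (\<Sum>j<p. P $$ (i,j) * (y j)^2))"
  proof (intro sum_mono)
    fix i assume "i \<in> {..<p}"
    hence i: "i < p" by simp
    have "(\<pi> i)^2 \<le> b * \<pi> i" using pos up i by (simp add: power2_eq_square mult_right_mono)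
    moreover have "(S i)^2 \<le> (\<Sum>j<p. P $$ (i,j) * (y j)^2)" by (rule S2[OF i])
    ultimately show "(\<pi> i)^2 * (S i)^2 \<le> (b * \<pi> i) * (\<Sum>j<p. P $$ (i,j) * (y j)^2)"
    proof (rule mult_mono)
      show "0 \<le> b * \<pi> i" using \<open>(\<pi> i)^2 \<le> b * \<pi> i\<close> zero_le_power2[of "\<pi> i"] by linarith
    qed auto
  qed
  also have "\<dots> = b * (\<Sum>i<p. \<Sum>j<p. \<pi> i * P $$ (i,j) * (y j)^2)"
    by (simp add: sum_distrib_left mult.assoc)
  also have "\<dots> = b * (\<Sum>j<p. \<Sum>i<p. \<pi> i * P $$ (i,j) * (y j)^2)"
    by (subst sum.swap) (rule refl)
  also have "\<dots> = b * (\<Sum>j<p. (y j)^2 * (\<Sum>i<p. \<pi> i * P $$ (i,j)))"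
    by (simp add: sum_distrib_left mult.commute)
  also have "\<dots> = b * (\<Sum>j<p. (x $ j)^2)"
    using stat pos unfolding y_def by (intro arg_cong[of _ _ "(*) b"] sum.cong refl) (auto simp add: power_divide less_imp_le dest: less_imp_neq)
  also have "\<dots> = b * (x \<bullet> x)" using x by (simp add: sprod_sum[of _ p] power2_eq_square)
  finally show ?thesis unfolding Q_def .
qed

lemma transpose_mat_diag: "transpose_mat (mat_diag n f) = mat_diag n f"
  by (intro eq_matI) (auto simp: mat_diag_def)

lemma mat_diag_cong: "(\<And>i. i < n \<Longrightarrow> f i = g i) \<Longrightarrow> mat_diag n f = mat_diag n g"
  by (intro eq_matI) (auto simp: mat_diag_def)

lemma pow2_mat: "(A :: 'a :: semiring_1 mat) \<in> carrier_mat n n \<Longrightarrow> A ^\<^sub>m 2 = A * A"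
  by (simp add: numeral_2_eq_2)

lemma symmetric_sandwich:
  fixes U M :: "real mat"
  assumes U: "U \<in> carrier_mat p r" and M: "M \<in> carrier_mat p p" and sM: "transpose_mat M = M"
  shows "transpose_mat (transpose_mat U * M * U) = transpose_mat U * M * U"
proof -
  have "transpose_mat (transpose_mat U * M * U) = transpose_mat U * transpose_mat (transpose_mat U * M)"
    using U M by (intro transpose_mult[of _ r p _ r]) auto
  also have "transpose_mat (transpose_mat U * M) = transpose_mat M * U"
    using U M by (subst transpose_mult[of _ r p _ p]) auto
  finally show ?thesis using U M sM by (simp add: assoc_mult_mat[of _ r p _ p _ r])
qed

theorem mainTheorem6:
  fixes p r :: nat and U V P :: "real mat" and \<pi> :: "nat \<Rightarrow> real"
    and c\<^sub>1 C\<^sub>1 c\<^sub>2 :: real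
  assumes "r \<ge> 1"
    and U: "U \<in> carrier_mat p r" and V: "V \<in> carrier_mat p r"
    and U_nonneg: "\<forall>i<p. \<forall>j<r. U $$ (i,j) \<ge> 0"
    and V_nonneg: "\<forall>i<p. \<forall>j<r. V $$ (i,j) \<ge> 0"
    and U_rows: "\<forall>i<p. (\<Sum>j<r. U $$ (i,j)) = 1"
    and V_cols: "\<forall>j<r. (\<Sum>i<p. V $$ (i,j)) = 1"
    and P_def: "P = U * transpose_mat V"
    and erg: "ergodic_chain p P"
    and stat: "stationary_dist p P \<pi>"
    and cpos: "c\<^sub>1 > 0" "C\<^sub>1 > 0" "c\<^sub>2 > 0"
    and pi_bounds: "\<forall>j<p. c\<^sub>1 / real p \<le> \<pi> j \<and> \<pi> j \<le> C\<^sub>1 / real p"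
    and eigU: "lambda_min (transpose_mat U * (mat_diag p \<pi>)^\<^sub>m 2 * U)
                 \<ge> c\<^sub>2 / (real p * real r)"
    and eigV: "lambda_min (transpose_mat V * mat_diag p (\<lambda>i. 1 / \<pi> i) * V) \<ge> c\<^sub>2 * real r"
  shows "c\<^sub>2 / sqrt (real p) \<le> sing_val (mat_diag p \<pi> * P * mat_diag p (\<lambda>i. 1 / sqrt (\<pi> i))) r
       \<and> sing_val (mat_diag p \<pi> * P * mat_diag p (\<lambda>i. 1 / sqrt (\<pi> i))) r
         \<le> sing_val (mat_diag p \<pi> * P * mat_diag p (\<lambda>i. 1 / sqrt (\<pi> i))) 1
       \<and> sing_val (mat_diag p \<pi> * P * mat_diag p (\<lambda>i. 1 / sqrt (\<pi> i))) 1
         \<le> C\<^sub>1 / sqrt c\<^sub>1 / sqrt (real p)"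
proof -
  have r1: "1 \<le> r" by fact
  have P: "P \<in> carrier_mat p p" unfolding P_def using U V by simp
  from erg have Pst: "\<forall>i<p. \<forall>j<p. P $$ (i,j) \<ge> 0" "\<forall>i<p. (\<Sum>j<p. P $$ (i,j)) = 1"
    unfolding ergodic_chain_def stochastic_mat_def by auto
  from stat have pst: "\<forall>j<p. (\<Sum>i<p. \<pi> i * P $$ (i,j)) = \<pi> j" "(\<Sum>i<p. \<pi> i) = 1"
    unfolding stationary_dist_def by auto
  have p0: "0 < p" using pst(2) by (cases p) auto
  have pos: "\<forall>j<p. 0 < \<pi> j"
  proof (intro allI impI)
    fix j assume "j < p"
    hence "c\<^sub>1 / real p \<le> \<pi> j" using pi_bounds by auto
    moreover have "0 < c\<^sub>1 / real p" using cpos p0 by simp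
    ultimately show "0 < \<pi> j" by linarith
  qed
  have cC: "c\<^sub>1 \<le> C\<^sub>1"
  proof -
    have "c\<^sub>1 / real p \<le> C\<^sub>1 / real p" using pi_bounds p0 by force
    thus ?thesis using p0 by (simp add: divide_le_cancel)
  qed
  have up: "\<forall>j<p. \<pi> j \<le> C\<^sub>1 / real p" using pi_bounds by auto
  define D where "D = mat_diag p \<pi>"
  define Dh where "Dh = mat_diag p (\<lambda>i. 1 / sqrt (\<pi> i))"
  define Qm where "Qm = mat_diag p \<pi> * P * mat_diag p (\<lambda>i. 1 / sqrt (\<pi> i))"
  have D: "D \<in> carrier_mat p p" and Dh: "Dh \<in> carrier_mat p p" unfolding D_def Dh_def by auto
  have Qm_def': "Qm = D * P * Dh" unfolding Qm_def D_def Dh_def ..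
  have Qm: "Qm \<in> carrier_mat p p" unfolding Qm_def' using D Dh P by simp
  define A where "A = transpose_mat Qm * Qm"
  have A: "A \<in> carrier_mat p p" unfolding A_def using Qm by simp
  define X where "X = D * U"
  define Y where "Y = Dh * V"
  have X: "X \<in> carrier_mat p r" and Y: "Y \<in> carrier_mat p r" unfolding X_def Y_def using D Dh U V by auto
  define G where "G = transpose_mat U * (mat_diag p \<pi>)^\<^sub>m 2 * U"
  define H where "H = transpose_mat V * mat_diag p (\<lambda>i. 1 / \<pi> i) * V"
  have G: "G \<in> carrier_mat r r" and H: "H \<in> carrier_mat r r" unfolding G_def H_def using U V by auto
  have DhT: "transpose_mat Dh = Dh" unfolding Dh_def by (rule transpose_mat_diag)
  have DT: "transpose_mat D = D" unfolding D_def by (rule transpose_mat_diag)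
  have QXY: "Qm = X * transpose_mat Y"
    unfolding Qm_def' X_def Y_def P_def using U V D Dh
    by (simp add: transpose_mult[of _ p p _ r] DhT assoc_mult_mat[of _ p p _ p _ p] assoc_mult_mat[of _ p r _ p _ p]
        assoc_mult_mat[of _ p p _ r _ p])
  have G_D: "G = transpose_mat U * (D * D) * U"
    unfolding G_def D_def[symmetric] using pow2_mat[OF D] by simp
  have XX: "transpose_mat X * X = G"
    unfolding X_def G_D using U D
    by (simp add: transpose_mult[of _ p p _ r] DT
        assoc_mult_mat[of _ r p _ p _ r] assoc_mult_mat[of _ r p _ p _ p] assoc_mult_mat[of _ p p _ p _ r])
  have YY: "transpose_mat Y * Y = H"
  proof -
    have dd: "Dh * Dh = mat_diag p (\<lambda>i. 1 / \<pi> i)" unfolding Dh_def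
      using pos by (simp, intro mat_diag_cong) (simp add: real_sqrt_mult[symmetric] less_imp_le)
    have ddv: "Dh * (Dh * V) = mat_diag p (\<lambda>i. 1 / \<pi> i) * V"
      using assoc_mult_mat[of Dh p p Dh p V r] Dh V dd by simp
    show ?thesis unfolding Y_def H_def using V Dh
      by (simp add: transpose_mult[of _ p p _ r] DhT assoc_mult_mat[of _ r p _ p _ r]
        assoc_mult_mat[of _ r p _ p _ p] assoc_mult_mat[of _ p p _ p _ r] ddv)
  qed
  have AYGY: "A = Y * G * transpose_mat Y"
    unfolding A_def QXY XX[symmetric] using X Y
    by (simp add: transpose_mult[of _ p r _ p] assoc_mult_mat[of _ p r _ p _ p]
        assoc_mult_mat[of _ p r _ r _ p] assoc_mult_mat[of _ r p _ r _ p])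
  have GYY: "G * transpose_mat Y * Y = G * H"
    unfolding YY[symmetric] using G Y by (simp add: assoc_mult_mat[of _ r r _ p _ r])
  have syl: "[:0,1:]^r * char_poly A = [:0,1:]^p * char_poly (G * H)"
    using sylvester_char_poly[OF Y G] unfolding AYGY GYY .

  define cG where "cG = c\<^sub>2 / (real p * real r)"
  define cH where "cH = c\<^sub>2 * real r"
  have cG0: "0 < cG" unfolding cG_def using cpos p0 r1 by simp
  have cH0: "0 < cH" unfolding cH_def using cpos r1 by simp
  have symG: "transpose_mat G = G" unfolding G_def
    by (rule symmetric_sandwich[OF U]) (auto simp: pow2_mat[OF mat_diag_dim] transpose_mat_diag)
  have symH: "transpose_mat H = H" unfolding H_def
    by (rule symmetric_sandwich[OF V]) (auto simp: transpose_mat_diag)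
  have lamG: "cG * (v \<bullet> v) \<le> v \<bullet> (G *\<^sub>v v)" if v: "v \<in> carrier_vec r" for v
  proof -
    have "cG * (v \<bullet> v) \<le> lambda_min G * (v \<bullet> v)"
      using eigU sprod_self_nonneg[of v] unfolding cG_def G_def by (intro mult_right_mono) auto
    also have "\<dots> \<le> v \<bullet> (G *\<^sub>v v)" using rayleigh_lower[OF G _ symG v] r1 by simp
    finally show ?thesis .
  qed
  have lamH: "cH * (v \<bullet> v) \<le> v \<bullet> (H *\<^sub>v v)" if v: "v \<in> carrier_vec r" for v
  proof -
    have "cH * (v \<bullet> v) \<le> lambda_min H * (v \<bullet> v)"
      using eigV sprod_self_nonneg[of v] unfolding cH_def H_def by (intro mult_right_mono) auto
    also have "\<dots> \<le> v \<bullet> (H *\<^sub>v v)" using rayleigh_lower[OF H _ symH v] r1 by simp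
    finally show ?thesis .
  qed
  have GH: "G * H \<in> carrier_mat r r" using G H by simp
  define \<mu> where "\<mu> = cG * cH"
  have \<mu>0: "0 < \<mu>" unfolding \<mu>_def using cG0 cH0 by simp
  have rootsGH: "\<mu> \<le> e" if e: "poly (char_poly (G * H)) e = 0" for e
  proof -
    have "eigenvalue (G * H) e" using e eigenvalue_root_char_poly[OF GH] by simp
    then obtain v where v: "v \<in> carrier_vec r" "v \<noteq> 0\<^sub>v r" "(G * H) *\<^sub>v v = e \<cdot>\<^sub>v v"
      unfolding eigenvalue_def eigenvector_def using GH by auto
    define w where "w = H *\<^sub>v v"
    have w: "w \<in> carrier_vec r" unfolding w_def using H v by simp
    have Gw: "G *\<^sub>v w = e \<cdot>\<^sub>v v" unfolding w_def using v(3) G H v(1) by simp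
    define h where "h = v \<bullet> w"
    have vv: "0 < v \<bullet> v" using sprod_self_nonneg[of v] sprod_self_zero[OF v(1)] v(2) by fastforce
    have hge: "cH * (v \<bullet> v) \<le> h" unfolding h_def w_def by (rule lamH[OF v(1)])
    hence h0: "0 < h" using vv cH0 by (smt (verit) mult_pos_pos)
    have wGw: "w \<bullet> (G *\<^sub>v w) = e * h" unfolding Gw h_def using v(1) w
      by (simp add: comm_scalar_prod[of _ r])
    have cs: "h * h \<le> (v \<bullet> v) * (w \<bullet> w)" using vec_cs[OF v(1) w] unfolding h_def by (simp add: power2_eq_square)
    have "cH * h * (v \<bullet> v) \<le> h * h" using hge h0 by (simp add: mult.commute mult_left_mono)
    hence "cH * h * (v \<bullet> v) \<le> (w \<bullet> w) * (v \<bullet> v)" using cs by (simp add: mult.commute)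
    hence hw: "cH * h \<le> w \<bullet> w" using vv by simp
    have "cG * (cH * h) \<le> cG * (w \<bullet> w)" using hw cG0 by simp
    also have "\<dots> \<le> e * h" using lamG[OF w] wGw by simp
    finally have "\<mu> * h \<le> e * h" unfolding \<mu>_def by (simp add: mult.assoc)
    thus ?thesis using h0 by simp
  qed
  have symA: "transpose_mat A = A" unfolding A_def using Qm by (simp add: transpose_mult[of _ p p _ p])
  have rootsA: "e \<le> C\<^sub>1 / real p" if e: "poly (char_poly A) e = 0" for e
  proof -
    have "eigenvalue A e" using e eigenvalue_root_char_poly[OF A] by simp
    then obtain x where x: "x \<in> carrier_vec p" "x \<noteq> 0\<^sub>v p" "A *\<^sub>v x = e \<cdot>\<^sub>v x"
      unfolding eigenvalue_def eigenvector_def using A by auto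
    have xx: "0 < x \<bullet> x" using sprod_self_nonneg[of x] sprod_self_zero[OF x(1)] x(2) by fastforce
    have "e * (x \<bullet> x) = x \<bullet> (A *\<^sub>v x)" using x by simp
    also have "A *\<^sub>v x = transpose_mat Qm *\<^sub>v (Qm *\<^sub>v x)" unfolding A_def using Qm x(1) by simp
    also have "x \<bullet> \<dots> = (Qm *\<^sub>v x) \<bullet> (Qm *\<^sub>v x)"
      using transpose_vec_mult_scalar[OF Qm x(1), of "Qm *\<^sub>v x"] Qm x(1)
      by (simp add: comm_scalar_prod[of _ p])
    also have "\<dots> \<le> C\<^sub>1 / real p * (x \<bullet> x)" unfolding Qm_def
      by (rule Q_contract[OF P Pst(1) Pst(2) pst(1) pos up x(1)])
    finally have "e * (x \<bullet> x) \<le> C\<^sub>1 / real p * (x \<bullet> x)" .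
    thus ?thesis using mult_le_cancel_right_pos[OF xx] by blast
  qed
  obtain es where es: "char_poly A = (\<Prod>e\<leftarrow>es. [:-e,1:])" "length es = p"
    using sym_char_poly_split[OF A symA] by blast
  have prA: "proots (char_poly A) = mset es" unfolding es(1) by (rule proots_linear_prod)
  have cpA0: "char_poly A \<noteq> 0" using degree_monic_char_poly[OF A] by auto
  have cpGH0: "char_poly (G * H) \<noteq> 0" using degree_monic_char_poly[OF GH] by auto
  have x0: "([:0,1:] :: real poly) \<noteq> 0" by simp
  have rp: "r \<le> p"
  proof (rule ccontr)
    assume "\<not> r \<le> p"
    hence "r = p + (r - p)" "0 < r - p" by auto
    hence "[:0,1:]^p * ([:0,1:]^(r - p) * char_poly A) = [:0,1:]^p * char_poly (G * H)"
      using syl by (metis power_add mult.assoc)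
    hence "char_poly (G * H) = [:0,1:]^(r - p) * char_poly A" using x0 by simp
    hence "poly (char_poly (G * H)) 0 = 0" using \<open>0 < r - p\<close> by simp
    from rootsGH[OF this] \<mu>0 show False by simp
  qed
  have cpA: "char_poly A = [:0,1:]^(p - r) * char_poly (G * H)"
  proof -
    have "[:0,1:]^r * char_poly A = [:0,1:]^r * ([:0,1:]^(p - r) * char_poly (G * H))"
      using syl rp by (metis power_add mult.assoc le_add_diff_inverse)
    thus ?thesis using x0 by simp
  qed
  have prA2: "proots (char_poly A) = repeat_mset (p - r) {#0#} + proots (char_poly (G * H))"
    unfolding cpA by (subst proots_mult) (use cpGH0 in \<open>auto simp: proots_power\<close>)
  have szGH: "size (proots (char_poly (G * H))) = r"
    using arg_cong[OF prA2, of size] prA es(2) rp by simp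
  define M where "M = image_mset sqrt (proots (char_poly A))"
  have sv: "sing_vals Qm = rev (sorted_list_of_multiset M)"
    unfolding sing_vals_def M_def A_def ..
  have szM: "size M = p" unfolding M_def prA using es(2) by simp
  have sq\<mu>: "sqrt \<mu> = c\<^sub>2 / sqrt (real p)"
  proof -
    have "\<mu> = c\<^sub>2^2 / real p" unfolding \<mu>_def cG_def cH_def using r1 by (simp add: power2_eq_square)
    thus ?thesis using cpos by (simp add: real_sqrt_divide)
  qed
  have cnt: "r \<le> size (filter_mset (\<lambda>y. c\<^sub>2 / sqrt (real p) \<le> y) M)"
  proof -
    have allGH: "filter_mset (\<lambda>y. c\<^sub>2 / sqrt (real p) \<le> y) (image_mset sqrt (proots (char_poly (G * H))))
       = image_mset sqrt (proots (char_poly (G * H)))"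
    proof (rule filter_mset_eq_conv[THEN iffD2], intro conjI ballI)
      fix y assume "y \<in># image_mset sqrt (proots (char_poly (G * H)))"
      then obtain e where e: "e \<in># proots (char_poly (G * H))" "y = sqrt e" by auto
      have "poly (char_poly (G * H)) e = 0" using e(1) cpGH0 by simp
      hence "\<mu> \<le> e" by (rule rootsGH)
      hence "sqrt \<mu> \<le> y" unfolding e(2) by simp
      thus "c\<^sub>2 / sqrt (real p) \<le> y" unfolding sq\<mu> .
    qed auto
    have "M = image_mset sqrt (repeat_mset (p - r) {#0#}) + image_mset sqrt (proots (char_poly (G * H)))"
      unfolding M_def prA2 by simp
    hence "size (filter_mset (\<lambda>y. c\<^sub>2 / sqrt (real p) \<le> y) M) \<ge>
           size (filter_mset (\<lambda>y. c\<^sub>2 / sqrt (real p) \<le> y) (image_mset sqrt (proots (char_poly (G * H)))))"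
      by simp
    thus ?thesis unfolding allGH using szGH by simp
  qed
  have s1: "c\<^sub>2 / sqrt (real p) \<le> sing_val Qm r"
    unfolding sing_val_def sv by (rule sorted_kth_ge[OF r1 cnt])
  have s2: "sing_val Qm r \<le> sing_val Qm 1"
    unfolding sing_val_def sv by (rule sorted_kth_le_first[OF r1]) (use szM rp in simp)
  have bndM: "\<forall>y\<in>#M. y \<le> C\<^sub>1 / sqrt c\<^sub>1 / sqrt (real p)"
  proof
    fix y assume "y \<in># M"
    then obtain e where e: "e \<in># proots (char_poly A)" "y = sqrt e" unfolding M_def by auto
    have "poly (char_poly A) e = 0" using e(1) cpA0 by simp
    hence "e \<le> C\<^sub>1 / real p" by (rule rootsA)
    hence "y \<le> sqrt (C\<^sub>1 / real p)" unfolding e(2) by simp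
    also have "\<dots> = sqrt C\<^sub>1 / sqrt (real p)" by (simp add: real_sqrt_divide)
    also have "\<dots> \<le> C\<^sub>1 / sqrt c\<^sub>1 / sqrt (real p)"
    proof (rule divide_right_mono)
      have "sqrt c\<^sub>1 * sqrt C\<^sub>1 \<le> sqrt C\<^sub>1 * sqrt C\<^sub>1"
        using cC cpos by (intro mult_right_mono) auto
      also have "\<dots> = C\<^sub>1" using cpos by simp
      finally show "sqrt C\<^sub>1 \<le> C\<^sub>1 / sqrt c\<^sub>1" using cpos by (simp add: field_simps)
    qed simp
    finally show "y \<le> C\<^sub>1 / sqrt c\<^sub>1 / sqrt (real p)" .
  qed
  have Mne: "M \<noteq> {#}" using szM p0 by auto
  have s3: "sing_val Qm 1 \<le> C\<^sub>1 / sqrt c\<^sub>1 / sqrt (real p)"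
    unfolding sing_val_def sv by (rule sorted_first_le[OF Mne bndM])
  show ?thesis using s1 s2 s3 unfolding Qm_def by simp
qed

end
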